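(* Let $f:\mathbb{R}^{d_0}\to\mathbb{R}^{d_L}$ be an MLP $x^0=x$, $x^l=h(W_lx^{l-1}+b_l)$ for $l=1,\dots,L$, $f(x)=x^L$, where $h$ is the LeakyReLU with slope $\alpha\in(0,1)$ applied componentwise, each $W_l\in\mathbb{R}^{d_l\times d_{l-1}}$ has full rank (rank $\min(d_l,d_{l-1})$), and the dimensions are monotone: either $d_0\le d_1\le\dots\le d_L$ or $d_0\ge d_1\ge\dots\ge d_L$. Then there is a Lebesgue-null set $\mathcal{N}\subset\mathbb{R}^{d_0}$ such that $f$ is differentiable on $\mathbb{R}^{d_0}\setminus\mathcal{N}$ with Jacobian of full rank $\min(d_0,d_L)$ there. If in addition $d_L\le d_0$, then $f$ is surjective onto $\mathbb{R}^{d_L}$.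
   Context: The LeakyReLU with slope $\alpha$ is $h(t)=\max(0,t)+\alpha\min(0,t)$. *)

theory Defs
  imports "HOL-Analysis.Analysis" "Jordan_Normal_Form.DL_Rank"
begin

text \<open>LeakyReLU with slope alpha.\<close>
definition leaky_relu :: "real \<Rightarrow> real \<Rightarrow> real" where
  "leaky_relu \<alpha> t = max 0 t + \<alpha> * min 0 t"

text \<open>Hidden states of the MLP: x^0 = x, x^l = h(W_l x^(l-1) + b_l).\<close>
fun mlp_layer :: "real \<Rightarrow> (nat \<Rightarrow> real mat) \<Rightarrow> (nat \<Rightarrow> real Matrix.vec) \<Rightarrow> nat \<Rightarrow> real Matrix.vec \<Rightarrow> real Matrix.vec" where
  "mlp_layer \<alpha> W b 0 x = x"
| "mlp_layer \<alpha> W b (Suc l) x =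
     map_vec (leaky_relu \<alpha>) (W (Suc l) *\<^sub>v mlp_layer \<alpha> W b l x + b (Suc l))"

text \<open>Identification of real^'n with R^{CARD('n)} via the canonical enumeration of the finite type.\<close>
definition vec_of_cart :: "real^'n::finite \<Rightarrow> real Matrix.vec" where
  "vec_of_cart x = Matrix.vec CARD('n) (\<lambda>j. x $ from_nat_into (UNIV :: 'n set) j)"

definition cart_of_vec :: "real Matrix.vec \<Rightarrow> real^'m::finite" where
  "cart_of_vec v = (\<chi> i. vec_index v (to_nat_on (UNIV :: 'm set) i))"

text \<open>The network function f : R^{d_0} -> R^{d_L}, f(x) = x^L.\<close>
definition mlp :: "real \<Rightarrow> (nat \<Rightarrow> real mat) \<Rightarrow> (nat \<Rightarrow> real Matrix.vec) \<Rightarrow> nat \<Rightarrow> real^'n::finite \<Rightarrow> real^'m::finite" where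
  "mlp \<alpha> W b L x = cart_of_vec (mlp_layer \<alpha> W b L (vec_of_cart x))"

end

theory Submission
  imports Defs
begin

lemma tn_lt: "to_nat_on (UNIV :: 'n::finite set) k < CARD('n)"
  using to_nat_on_finite[of "UNIV :: 'n set"] by (auto simp: bij_betw_def)

lemma fn_tn: "from_nat_into (UNIV :: 'n::finite set) (to_nat_on UNIV k) = k"
  by (simp add: from_nat_into_to_nat_on)

lemma tn_fn: "j < CARD('n::finite) \<Longrightarrow> to_nat_on (UNIV :: 'n set) (from_nat_into UNIV j) = j"
  using to_nat_on_finite[of "UNIV :: 'n set"]
  by (intro to_nat_on_from_nat_into) (auto simp: bij_betw_def)

lemma vec_of_cart_carrier[simp]: "vec_of_cart (x :: real^'n::finite) \<in> carrier_vec CARD('n)"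
  by (simp add: vec_of_cart_def)

lemma dim_vec_of_cart[simp]: "dim_vec (vec_of_cart (x :: real^'n::finite)) = CARD('n)"
  by (simp add: vec_of_cart_def)

lemma cart_vec_cart[simp]: "cart_of_vec (vec_of_cart x) = (x :: real^'n::finite)"
  by (simp add: cart_of_vec_def vec_of_cart_def tn_lt fn_tn vec_eq_iff)

lemma vec_cart_vec: "v \<in> carrier_vec CARD('n::finite) \<Longrightarrow> vec_of_cart (cart_of_vec v :: real^'n) = v"
  by (auto simp: cart_of_vec_def vec_of_cart_def tn_fn)

lemma vec_of_cart_add: "vec_of_cart (x + y :: real^'n::finite) = vec_of_cart x + vec_of_cart y"
  by (auto simp: vec_of_cart_def)

lemma vec_of_cart_scale: "vec_of_cart (c *\<^sub>R x :: real^'n::finite) = c \<cdot>\<^sub>v vec_of_cart x"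
  by (auto simp: vec_of_cart_def)

lemma vec_of_cart_eq0: "vec_of_cart (x :: real^'n::finite) = 0\<^sub>v CARD('n) \<Longrightarrow> x = 0"
proof -
  assume "vec_of_cart x = 0\<^sub>v CARD('n)"
  hence "cart_of_vec (vec_of_cart x) = (cart_of_vec (0\<^sub>v CARD('n)) :: real^'n)" by simp
  moreover have "(cart_of_vec (0\<^sub>v CARD('n)) :: real^'n) = 0"
    by (simp add: cart_of_vec_def tn_lt Finite_Cartesian_Product.vec_eq_iff)
  ultimately have "cart_of_vec (vec_of_cart x) = (0 :: real^'n)" by simp
  thus "x = 0" by (metis cart_vec_cart)
qed

lemma cart_of_vec_add: "u \<in> carrier_vec CARD('m::finite) \<Longrightarrow> v \<in> carrier_vec CARD('m) \<Longrightarrow>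
    (cart_of_vec (u + v) :: real^'m) = cart_of_vec u + cart_of_vec v"
  by (auto simp: cart_of_vec_def Finite_Cartesian_Product.vec_eq_iff tn_lt)

lemma cart_of_vec_scale: "u \<in> carrier_vec CARD('m::finite) \<Longrightarrow>
    (cart_of_vec (c \<cdot>\<^sub>v u) :: real^'m) = c *\<^sub>R cart_of_vec u"
  by (auto simp: cart_of_vec_def Finite_Cartesian_Product.vec_eq_iff tn_lt)

lemma scalar_prod_cart:
  assumes r: "r \<in> carrier_vec CARD('n::finite)"
  shows "scalar_prod r (vec_of_cart (y :: real^'n)) = inner (cart_of_vec r :: real^'n) y"
proof -
  have "scalar_prod r (vec_of_cart y) = (\<Sum>j<CARD('n). r $ j * y $ from_nat_into UNIV j)"
    using r by (simp add: scalar_prod_def vec_of_cart_def atLeast0LessThan)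
  also have "\<dots> = (\<Sum>k\<in>UNIV. r $ (to_nat_on UNIV k) * y $ k)"
    by (rule sum.reindex_bij_betw[of "to_nat_on (UNIV::'n set)" UNIV "{..<CARD('n)}"
          "\<lambda>j. r $ j * y $ from_nat_into UNIV j", simplified fn_tn, symmetric])
       (use to_nat_on_finite[of "UNIV :: 'n set"] in simp)
  also have "\<dots> = inner (cart_of_vec r :: real^'n) y"
    by (simp add: inner_vec_def cart_of_vec_def)
  finally show ?thesis .
qed

lemma cart_of_vec_eq0: "r \<in> carrier_vec CARD('n::finite) \<Longrightarrow> (cart_of_vec r :: real^'n) = 0 \<Longrightarrow> r = 0\<^sub>v CARD('n)"
proof -
  assume r: "r \<in> carrier_vec CARD('n)" and "(cart_of_vec r :: real^'n) = 0"
  hence "vec_of_cart (cart_of_vec r :: real^'n) = vec_of_cart (0::real^'n)" by simp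
  thus ?thesis using r by (simp add: vec_cart_vec) (auto simp: vec_of_cart_def)
qed

lemma lr_eq: "leaky_relu a t = (if 0 \<le> t then 1 else a) * t"
  by (simp add: leaky_relu_def)

lemma lr_inv: "0 < a \<Longrightarrow> leaky_relu a (if 0 \<le> t then t else t / a) = t"
proof (cases "0 \<le> t")
  case False
  assume a: "0 < a"
  hence "t / a < 0" using False by (simp add: divide_neg_pos)
  thus ?thesis using False a by (simp add: leaky_relu_def)
qed (simp add: leaky_relu_def)

lemma layer_dim:
  assumes W_dim: "\<forall>l\<in>{1..L}. W l \<in> carrier_mat (d l) (d (l - 1))"
    and b_dim: "\<forall>l\<in>{1..L}. b l \<in> carrier_vec (d l)"
    and x: "x \<in> carrier_vec (d 0)"
  shows "l \<le> L \<Longrightarrow> mlp_layer a W b l x \<in> carrier_vec (d l)"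
proof (induction l)
  case 0 thus ?case using x by simp
next
  case (Suc l)
  have sl: "Suc l \<in> {1..L}" using Suc.prems by simp
  have Wc: "W (Suc l) \<in> carrier_mat (d (Suc l)) (d l)" and bc: "b (Suc l) \<in> carrier_vec (d (Suc l))"
    using bspec[OF W_dim sl] bspec[OF b_dim sl] by auto
  have xc: "mlp_layer a W b l x \<in> carrier_vec (d l)" using Suc by simp
  have "W (Suc l) *\<^sub>v mlp_layer a W b l x + b (Suc l) \<in> carrier_vec (d (Suc l))"
    by (rule add_carrier_vec[OF mult_mat_vec_carrier[OF Wc xc] bc])
  thus ?case by (simp only: mlp_layer.simps map_carrier_vec)
qed

lemma scale_rows:
  assumes B: "B \<in> carrier_mat n1 k" and v: "v \<in> carrier_vec k"
  shows "mat n1 k (\<lambda>(i,j). s i * B $$ (i,j)) *\<^sub>v v = vec n1 (\<lambda>i. s i * (B *\<^sub>v v) $ i)"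
proof (rule eq_vecI)
  fix i assume "i < dim_vec (vec n1 (\<lambda>i. s i * (B *\<^sub>v v) $ i))"
  hence i: "i < n1" by simp
  have "(mat n1 k (\<lambda>(i,j). s i * B $$ (i,j)) *\<^sub>v v) $ i
      = scalar_prod (row (mat n1 k (\<lambda>(i,j). s i * B $$ (i,j))) i) v"
    by (rule index_mult_mat_vec) (use i in simp)
  also have "\<dots> = (\<Sum>j<k. s i * B $$ (i,j) * v $ j)"
    using i v by (simp add: scalar_prod_def atLeast0LessThan)
  also have "\<dots> = s i * (\<Sum>j<k. B $$ (i,j) * v $ j)"
    by (simp add: sum_distrib_left mult.assoc)
  also have "(\<Sum>j<k. B $$ (i,j) * v $ j) = (B *\<^sub>v v) $ i"
  proof -
    have "(B *\<^sub>v v) $ i = scalar_prod (row B i) v"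
      by (rule index_mult_mat_vec) (use i B in simp)
    thus ?thesis using i B v by (simp add: scalar_prod_def atLeast0LessThan)
  qed
  finally show "(mat n1 k (\<lambda>(i,j). s i * B $$ (i,j)) *\<^sub>v v) $ i = vec n1 (\<lambda>i. s i * (B *\<^sub>v v) $ i) $ i"
    using i by simp
qed simp

lemma affine_comp:
  assumes W: "W \<in> carrier_mat n1 n0" and M: "M \<in> carrier_mat n0 k" and c: "c \<in> carrier_vec n0"
    and u: "u \<in> carrier_vec k" and b: "b \<in> carrier_vec n1" and i: "i < n1"
  shows "(W *\<^sub>v (M *\<^sub>v u + c) + b) $ i = scalar_prod (row (W * M) i) u + (W *\<^sub>v c + b) $ i"
proof -
  have "W *\<^sub>v (M *\<^sub>v u + c) = W *\<^sub>v (M *\<^sub>v u) + W *\<^sub>v c"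
    by (rule mult_add_distrib_mat_vec[OF W _ c]) (use M u in simp)
  also have "W *\<^sub>v (M *\<^sub>v u) = (W * M) *\<^sub>v u"
    by (rule assoc_mult_mat_vec[OF W M u, symmetric])
  finally have "W *\<^sub>v (M *\<^sub>v u + c) = (W * M) *\<^sub>v u + W *\<^sub>v c" .
  hence "(W *\<^sub>v (M *\<^sub>v u + c) + b) = ((W * M) *\<^sub>v u + W *\<^sub>v c) + b" by (rule arg_cong)
  also have "\<dots> = (W * M) *\<^sub>v u + (W *\<^sub>v c + b)"
    by (rule assoc_add_vec[of _ n1]) (use W M c u b in auto)
  finally have eq: "(W *\<^sub>v (M *\<^sub>v u + c) + b) = (W * M) *\<^sub>v u + (W *\<^sub>v c + b)" .
  have "(W *\<^sub>v (M *\<^sub>v u + c) + b) $ i = ((W * M) *\<^sub>v u + (W *\<^sub>v c + b)) $ i"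
    by (rule arg_cong[OF eq])
  also have "\<dots> = ((W * M) *\<^sub>v u) $ i + (W *\<^sub>v c + b) $ i"
    by (rule index_add_vec(1)) (use W c b i in simp)
  also have "((W * M) *\<^sub>v u) $ i = scalar_prod (row (W * M) i) u"
    by (rule index_mult_mat_vec) (use W M i in simp)
  finally show ?thesis .
qed

lemma chain_mono:
  assumes "\<forall>k<L. d k \<le> d (Suc k)" "i \<le> j" "j \<le> L"
  shows "(d i :: nat) \<le> d j"
  using assms(2,3)
proof (induction j)
  case 0 thus ?case by simp
next
  case (Suc j)
  show ?case
  proof (cases "i = Suc j")
    case False
    hence ij: "i \<le> j" using Suc.prems by simp
    have "d i \<le> d j" by (rule Suc.IH[OF ij]) (use Suc.prems in simp)
    moreover have "d j \<le> d (Suc j)" using assms(1) Suc.prems by simp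
    ultimately show ?thesis by (rule le_trans)
  qed simp
qed

lemma chain_anti:
  assumes "\<forall>k<L. d (Suc k) \<le> d k" "i \<le> j" "j \<le> L"
  shows "(d j :: nat) \<le> d i"
  using assms(2,3)
proof (induction j)
  case 0 thus ?case by simp
next
  case (Suc j)
  show ?case
  proof (cases "i = Suc j")
    case False
    hence ij: "i \<le> j" using Suc.prems by simp
    have "d j \<le> d i" by (rule Suc.IH[OF ij]) (use Suc.prems in simp)
    moreover have "d (Suc j) \<le> d j" using assms(1) Suc.prems by simp
    ultimately show ?thesis by (rule le_trans[rotated])
  qed simp
qed

lemma rank_inj:
  fixes A :: "real mat"
  assumes A: "A \<in> carrier_mat n nc" and r: "vec_space.rank n A = nc"
    and v: "v \<in> carrier_vec nc" and Av: "A *\<^sub>v v = 0\<^sub>v n"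
  shows "v = 0\<^sub>v nc"
proof -
  interpret vec_space "TYPE(real)" n .
  have dist: "distinct (cols A)"
  proof (rule ccontr)
    assume nd: "\<not> distinct (cols A)"
    have "card (set (cols A)) < length (cols A)"
      using nd card_distinct card_length le_neq_implies_less by blast
    hence lt: "card (set (cols A)) < nc" using A by simp
    have li0: "lin_indpt {}"
    by (metis (no_types) empty_subsetI fin_dim finite_basis_exists subset_li_is_li vec_vs vectorspace.basis_def)
  obtain S where S: "maximal S (\<lambda>T. T \<subseteq> set (cols A) \<and> lin_indpt T)" "{} \<subseteq> S" "finite S"
      using maximal_exists_superset[of "set (cols A)" "(\<lambda>T. T \<subseteq> set (cols A) \<and> lin_indpt T)" "{}"]
      using li0 by auto
    have "rank A = card S" using rank_card_indpt[OF A S(1)] .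
    moreover have "card S \<le> card (set (cols A))"
      using S(1) unfolding maximal_def by (meson List.finite_set card_mono)
    ultimately show False using r lt by simp
  qed
  show ?thesis
  proof (rule ccontr)
    assume "v \<noteq> 0\<^sub>v nc"
    hence "lin_dep (set (cols A))" using lin_depI[OF A v _ Av dist] by simp
    moreover have "lin_indpt (set (cols A))" using full_rank_lin_indpt[OF A r dist] .
    ultimately show False by simp
  qed
qed

lemma rank_surj:
  fixes A :: "real mat"
  assumes A: "A \<in> carrier_mat n nc" and r: "vec_space.rank n A = n"
    and y: "y \<in> carrier_vec n"
  shows "\<exists>x\<in>carrier_vec nc. A *\<^sub>v x = y"
proof -
  interpret vec_space "TYPE(real)" n .
  have li0: "lin_indpt {}"
    by (metis (no_types) empty_subsetI fin_dim finite_basis_exists subset_li_is_li vec_vs vectorspace.basis_def)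
  obtain S where S: "maximal S (\<lambda>T. T \<subseteq> set (cols A) \<and> lin_indpt T)" "{} \<subseteq> S" "finite S"
    using maximal_exists_superset[of "set (cols A)" "(\<lambda>T. T \<subseteq> set (cols A) \<and> lin_indpt T)" "{}"]
    using li0 by auto
  have cS: "card S = n" using rank_card_indpt[OF A S(1)] r by simp
  have Ssub: "S \<subseteq> set (cols A)" and li: "lin_indpt S" using S(1) unfolding maximal_def by auto
  have Scar: "S \<subseteq> carrier_vec n" using Ssub cols_dim A by blast
  have "basis S" by (rule dim_li_is_basis) (use S(3) Scar li cS dim_is_n in auto)
  hence "span S = carrier_vec n" unfolding basis_def by simp
  hence "y \<in> span (set (cols A))" using y span_is_monotone[OF Ssub] by auto
  hence "y \<in> col_space A" unfolding col_space_def .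
  thus ?thesis using col_space_eq[OF A] A by auto
qed

lemma hyper_null:
  assumes r: "r \<in> carrier_vec CARD('n::finite)" and r0: "r \<noteq> 0\<^sub>v CARD('n)"
  shows "{y::real^'n. scalar_prod r (vec_of_cart y) + e = 0} \<in> null_sets lborel"
proof -
  define a where "a = (cart_of_vec r :: real^'n)"
  have a0: "a \<noteq> 0" using cart_of_vec_eq0[OF r] r0 unfolding a_def by blast
  have eq: "{y::real^'n. scalar_prod r (vec_of_cart y) + e = 0} = {y. inner a y = - e}"
    using scalar_prod_cart[OF r] unfolding a_def by (auto simp: algebra_simps)
  have "negligible {y::real^'n. inner a y = - e}" using negligible_hyperplane a0 by blast
  hence "{y::real^'n. inner a y = - e} \<in> null_sets lebesgue" by (simp add: negligible_iff_null_sets)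
  moreover have "{y::real^'n. inner a y = - e} \<in> sets lborel"
    using closed_hyperplane by (simp add: borel_closed)
  ultimately show ?thesis unfolding eq using null_sets_completion_iff by blast
qed

lemma local_affine:
  fixes \<alpha> :: real and W :: "nat \<Rightarrow> real mat" and b :: "nat \<Rightarrow> real Matrix.vec"
    and d :: "nat \<Rightarrow> nat" and L :: nat
  assumes alpha: "0 < \<alpha>"
    and d0: "d 0 = CARD('n::finite)"
    and W_dim: "\<forall>l\<in>{1..L}. W l \<in> carrier_mat (d l) (d (l - 1))"
    and b_dim: "\<forall>l\<in>{1..L}. b l \<in> carrier_vec (d l)"
    and W_rank: "\<forall>l\<in>{1..L}. vec_space.rank (d l) (W l) = min (d l) (d (l - 1))"
  shows "l \<le> L \<Longrightarrow> \<exists>A N. finite A \<and> N \<in> null_sets (lborel :: (real^'n) measure) \<and>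
     (\<forall>p\<in>A. fst p \<in> carrier_mat (d l) (d 0) \<and> snd p \<in> carrier_vec (d l) \<and>
        ((\<forall>k<L. d k \<le> d (Suc k)) \<longrightarrow> (\<forall>v\<in>carrier_vec (d 0). fst p *\<^sub>v v = 0\<^sub>v (d l) \<longrightarrow> v = 0\<^sub>v (d 0))) \<and>
        ((\<forall>k<L. d (Suc k) \<le> d k) \<longrightarrow> (\<forall>y\<in>carrier_vec (d l). \<exists>v\<in>carrier_vec (d 0). fst p *\<^sub>v v = y))) \<and>
     (\<forall>x::real^'n. x \<notin> N \<longrightarrow> (\<exists>p\<in>A. eventually (\<lambda>y. mlp_layer \<alpha> W b l (vec_of_cart y) = fst p *\<^sub>v vec_of_cart y + snd p) (nhds x)))"
proof (induction l)
  case 0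
  have uc: "\<And>y::real^'n. vec_of_cart y \<in> carrier_vec (d 0)" using d0 by simp
  show ?case
  proof (intro exI[of _ "{(1\<^sub>m (d 0), 0\<^sub>v (d 0))}"] exI[of _ "{}"] conjI)
    show "\<forall>x::real^'n. x \<notin> {} \<longrightarrow> (\<exists>p\<in>{(1\<^sub>m (d 0), 0\<^sub>v (d 0))}.
        eventually (\<lambda>y. mlp_layer \<alpha> W b 0 (vec_of_cart y) = fst p *\<^sub>v vec_of_cart y + snd p) (nhds x))"
      using uc by simp
  qed auto
next
  case (Suc l)
  hence lL: "l \<le> L" by simp
  from Suc.IH[OF lL] obtain A N where finA: "finite A" and nullN: "N \<in> null_sets (lborel :: (real^'n) measure)"
    and propA: "\<forall>p\<in>A. fst p \<in> carrier_mat (d l) (d 0) \<and> snd p \<in> carrier_vec (d l) \<and>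
        ((\<forall>k<L. d k \<le> d (Suc k)) \<longrightarrow> (\<forall>v\<in>carrier_vec (d 0). fst p *\<^sub>v v = 0\<^sub>v (d l) \<longrightarrow> v = 0\<^sub>v (d 0))) \<and>
        ((\<forall>k<L. d (Suc k) \<le> d k) \<longrightarrow> (\<forall>y\<in>carrier_vec (d l). \<exists>v\<in>carrier_vec (d 0). fst p *\<^sub>v v = y))"
    and locA: "\<forall>x::real^'n. x \<notin> N \<longrightarrow> (\<exists>p\<in>A. eventually (\<lambda>y. mlp_layer \<alpha> W b l (vec_of_cart y) = fst p *\<^sub>v vec_of_cart y + snd p) (nhds x))"
    by blast
  have pA1: "\<And>p. p \<in> A \<Longrightarrow> fst p \<in> carrier_mat (d l) (d 0)" using propA by blast
  have pA2: "\<And>p. p \<in> A \<Longrightarrow> snd p \<in> carrier_vec (d l)" using propA by blast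
  have pA3: "\<And>p v. p \<in> A \<Longrightarrow> (\<forall>k<L. d k \<le> d (Suc k)) \<Longrightarrow> v \<in> carrier_vec (d 0) \<Longrightarrow>
      fst p *\<^sub>v v = 0\<^sub>v (d l) \<Longrightarrow> v = 0\<^sub>v (d 0)" using propA by blast
  have pA4: "\<And>p y. p \<in> A \<Longrightarrow> (\<forall>k<L. d (Suc k) \<le> d k) \<Longrightarrow> y \<in> carrier_vec (d l) \<Longrightarrow>
      \<exists>v\<in>carrier_vec (d 0). fst p *\<^sub>v v = y" using propA by blast
  define W' where "W' = W (Suc l)"
  define b' where "b' = b (Suc l)"
  define n1 where "n1 = d (Suc l)"
  define n0 where "n0 = d l"
  define k0 where "k0 = d 0"
  have sl: "Suc l \<in> {1..L}" using Suc.prems by simp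
  have Wc: "W' \<in> carrier_mat n1 n0" using bspec[OF W_dim sl] unfolding W'_def n1_def n0_def by simp
  have bc: "b' \<in> carrier_vec n1" using bspec[OF b_dim sl] unfolding b'_def n1_def by simp
  have Wr: "vec_space.rank n1 W' = min n1 n0" using bspec[OF W_rank sl] unfolding W'_def n1_def n0_def by simp
  have uc: "\<And>y::real^'n. vec_of_cart y \<in> carrier_vec k0" using d0 unfolding k0_def by simp
  define S where "S = PiE {..<n1} (\<lambda>_. {1, \<alpha>})"
  define F where "F = (\<lambda>(s :: nat \<Rightarrow> real, p :: real mat \<times> real Matrix.vec).
      (mat n1 k0 (\<lambda>(i,j). s i * (W' * fst p) $$ (i,j)), vec n1 (\<lambda>i. s i * (W' *\<^sub>v snd p + b') $ i)))"
  define A' where "A' = F ` (S \<times> A)"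
  define H where "H = (\<lambda>(p :: real mat \<times> real Matrix.vec) i. {y :: real^'n.
      scalar_prod (row (W' * fst p) i) (vec_of_cart y) + (W' *\<^sub>v snd p + b') $ i = 0})"
  define N' where "N' = N \<union> (\<Union>pi\<in>A \<times> {..<n1}. if row (W' * fst (fst pi)) (snd pi) = 0\<^sub>v k0 then {} else H (fst pi) (snd pi))"
  have finS: "finite S" unfolding S_def by (intro finite_PiE) auto
  have finA': "finite A'" unfolding A'_def using finS finA by simp
  have nullN': "N' \<in> null_sets (lborel :: (real^'n) measure)"
    unfolding N'_def
  proof (rule null_sets.Un[OF nullN], rule null_sets_UN')
    show "countable (A \<times> {..<n1})" using finA by (simp add: countable_finite)
  next
    fix pi assume pi: "pi \<in> A \<times> {..<n1}"
    show "(if row (W' * fst (fst pi)) (snd pi) = 0\<^sub>v k0 then {} else H (fst pi) (snd pi)) \<in> null_sets lborel"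
    proof (cases "row (W' * fst (fst pi)) (snd pi) = 0\<^sub>v k0")
      case False
      have "fst pi \<in> A" using pi by (simp add: mem_Times_iff)
      hence Mc: "fst (fst pi) \<in> carrier_mat n0 k0" using pA1 unfolding n0_def k0_def by blast
      have "dim_vec (row (W' * fst (fst pi)) (snd pi)) = k0" using Mc by simp
      hence rc: "row (W' * fst (fst pi)) (snd pi) \<in> carrier_vec CARD('n)"
        using d0 unfolding k0_def by (intro carrier_vecI) simp
      have "H (fst pi) (snd pi) \<in> null_sets lborel"
        unfolding H_def using hyper_null[OF rc] False d0 unfolding k0_def by (simp add: case_prod_beta)
      thus ?thesis using False by simp
    qed simp
  qed
  have propA': "\<forall>p\<in>A'. fst p \<in> carrier_mat n1 k0 \<and> snd p \<in> carrier_vec n1 \<and>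
        ((\<forall>k<L. d k \<le> d (Suc k)) \<longrightarrow> (\<forall>v\<in>carrier_vec k0. fst p *\<^sub>v v = 0\<^sub>v n1 \<longrightarrow> v = 0\<^sub>v k0)) \<and>
        ((\<forall>k<L. d (Suc k) \<le> d k) \<longrightarrow> (\<forall>y\<in>carrier_vec n1. \<exists>v\<in>carrier_vec k0. fst p *\<^sub>v v = y))"
  proof
    fix p' assume "p' \<in> A'"
    then obtain s p where s: "s \<in> S" and p: "p \<in> A" and p': "p' = F (s, p)" unfolding A'_def by auto
    define M where "M = fst p"
    define c where "c = snd p"
    have Mc: "M \<in> carrier_mat n0 k0" and cc: "c \<in> carrier_vec n0"
      using pA1[OF p] pA2[OF p] unfolding M_def c_def n0_def k0_def by auto
    have WMc: "W' * M \<in> carrier_mat n1 k0" using Wc Mc by simp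
    have snz: "s i \<noteq> 0" if i: "i < n1" for i
    proof -
      have "s i \<in> {1, \<alpha>}" using s i unfolding S_def by (auto simp: PiE_iff)
      thus ?thesis using alpha by auto
    qed
    have fp': "fst p' = mat n1 k0 (\<lambda>(i,j). s i * (W' * M) $$ (i,j))"
      and sp': "snd p' = vec n1 (\<lambda>i. s i * (W' *\<^sub>v c + b') $ i)"
      unfolding p' F_def M_def c_def by simp_all
    have mv: "\<And>v. v \<in> carrier_vec k0 \<Longrightarrow> fst p' *\<^sub>v v = vec n1 (\<lambda>i. s i * ((W' * M) *\<^sub>v v) $ i)"
      unfolding fp' by (rule scale_rows[OF WMc])
    show "fst p' \<in> carrier_mat n1 k0 \<and> snd p' \<in> carrier_vec n1 \<and>
        ((\<forall>k<L. d k \<le> d (Suc k)) \<longrightarrow> (\<forall>v\<in>carrier_vec k0. fst p' *\<^sub>v v = 0\<^sub>v n1 \<longrightarrow> v = 0\<^sub>v k0)) \<and>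
        ((\<forall>k<L. d (Suc k) \<le> d k) \<longrightarrow> (\<forall>y\<in>carrier_vec n1. \<exists>v\<in>carrier_vec k0. fst p' *\<^sub>v v = y))"
    proof (intro conjI impI ballI)
      show "fst p' \<in> carrier_mat n1 k0" unfolding fp' by simp
      show "snd p' \<in> carrier_vec n1" unfolding sp' by simp
    next
      fix v :: "real Matrix.vec" assume inc: "\<forall>k<L. d k \<le> d (Suc k)" and v: "v \<in> carrier_vec k0" and z: "fst p' *\<^sub>v v = 0\<^sub>v n1"
      have "(W' * M) *\<^sub>v v = 0\<^sub>v n1"
      proof (rule eq_vecI)
        fix i assume "i < dim_vec (0\<^sub>v n1 :: real Matrix.vec)"
        hence i: "i < n1" by simp
        have "s i * ((W' * M) *\<^sub>v v) $ i = 0"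
          using arg_cong[OF z, of "\<lambda>w. w $ i"] mv[OF v] i by simp
        thus "((W' * M) *\<^sub>v v) $ i = 0\<^sub>v n1 $ i" using snz[OF i] i by simp
      qed (use Wc in simp)
      hence "W' *\<^sub>v (M *\<^sub>v v) = 0\<^sub>v n1" using assoc_mult_mat_vec[OF Wc Mc v] by simp
      moreover have "vec_space.rank n1 W' = n0"
        using Wr inc Suc.prems unfolding n1_def n0_def by (simp add: Suc_le_lessD)
      ultimately have "M *\<^sub>v v = 0\<^sub>v n0" using rank_inj[OF Wc] Mc v by simp
      thus "v = 0\<^sub>v k0" using pA3[OF p inc] v unfolding M_def n0_def k0_def by blast
    next
      fix y :: "real Matrix.vec" assume dec: "\<forall>k<L. d (Suc k) \<le> d k" and y: "y \<in> carrier_vec n1"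
      define z where "z = vec n1 (\<lambda>i. y $ i / s i)"
      have rk: "vec_space.rank n1 W' = n1"
        using Wr dec Suc.prems unfolding n1_def n0_def by (simp add: Suc_le_lessD)
      have "z \<in> carrier_vec n1" unfolding z_def by simp
      then obtain u where u: "u \<in> carrier_vec n0" and Wu: "W' *\<^sub>v u = z"
        using rank_surj[OF Wc rk] by blast
      obtain v where v: "v \<in> carrier_vec k0" and Mv: "M *\<^sub>v v = u"
        using pA4[OF p dec] u unfolding M_def n0_def k0_def by blast
      have "(W' * M) *\<^sub>v v = z" using assoc_mult_mat_vec[OF Wc Mc v] Mv Wu by simp
      hence "fst p' *\<^sub>v v = y"
        using mv[OF v] y snz unfolding z_def by (intro eq_vecI) auto
      thus "\<exists>v\<in>carrier_vec k0. fst p' *\<^sub>v v = y" using v by blast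
    qed
  qed
  have locA': "\<forall>x::real^'n. x \<notin> N' \<longrightarrow> (\<exists>p\<in>A'. eventually (\<lambda>y. mlp_layer \<alpha> W b (Suc l) (vec_of_cart y) = fst p *\<^sub>v vec_of_cart y + snd p) (nhds x))"
  proof (intro allI impI)
    fix x :: "real^'n" assume xN': "x \<notin> N'"
    hence "x \<notin> N" unfolding N'_def by simp
    then obtain p where p: "p \<in> A" and ev: "eventually (\<lambda>y. mlp_layer \<alpha> W b l (vec_of_cart y) = fst p *\<^sub>v vec_of_cart y + snd p) (nhds x)"
      using locA by blast
    define M where "M = fst p"
    define c where "c = snd p"
    have Mc: "M \<in> carrier_mat n0 k0" and cc: "c \<in> carrier_vec n0"
      using pA1[OF p] pA2[OF p] unfolding M_def c_def n0_def k0_def by auto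
    define zf where "zf = (\<lambda>i (y::real^'n). scalar_prod (row (W' * M) i) (vec_of_cart y) + (W' *\<^sub>v c + b') $ i)"
    define s where "s = (\<lambda>i. if i < n1 then (if 0 \<le> zf i x then 1 else \<alpha>) else undefined)"
    have sS: "s \<in> S" unfolding S_def s_def by (auto simp: PiE_iff extensional_def)
    have evi: "\<forall>i\<in>{..<n1}. eventually (\<lambda>y. leaky_relu \<alpha> (zf i y) = s i * zf i y) (nhds x)"
    proof
      fix i assume "i \<in> {..<n1}"
      hence i: "i < n1" by simp
      have "dim_vec (row (W' * M) i) = k0" using Mc by simp
      hence rc: "row (W' * M) i \<in> carrier_vec CARD('n)"
        using d0 unfolding k0_def by (intro carrier_vecI) simp
      show "eventually (\<lambda>y. leaky_relu \<alpha> (zf i y) = s i * zf i y) (nhds x)"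
      proof (cases "row (W' * M) i = 0\<^sub>v k0")
        case True
        have "\<And>y. zf i y = (W' *\<^sub>v c + b') $ i"
          unfolding zf_def True using uc by simp
        hence "\<And>y. leaky_relu \<alpha> (zf i y) = s i * zf i y"
          using i unfolding s_def by (simp add: lr_eq)
        thus ?thesis by simp
      next
        case False
        have "(p, i) \<in> A \<times> {..<n1}" using p i by simp
        hence "x \<notin> H p i" using xN' False unfolding N'_def M_def by force
        hence zx: "zf i x \<noteq> 0" unfolding H_def zf_def M_def c_def by (simp add: case_prod_beta)
        define a where "a = (cart_of_vec (row (W' * M) i) :: real^'n)"
        define e where "e = (W' *\<^sub>v c + b') $ i"
        have zfe: "\<And>y. zf i y = inner a y + e"
          unfolding zf_def a_def e_def using scalar_prod_cart[OF rc] by simp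
        show ?thesis
        proof (cases "0 < zf i x")
          case True
          have "eventually (\<lambda>y. y \<in> {y. inner a y > - e}) (nhds x)"
            by (rule eventually_nhds_in_open[OF open_halfspace_gt]) (use True zfe in simp)
          thus ?thesis
            by (rule eventually_mono) (use True i in \<open>auto simp: zfe s_def lr_eq\<close>)
        next
          case False
          hence neg: "zf i x < 0" using zx by simp
          have "eventually (\<lambda>y. y \<in> {y. inner a y < - e}) (nhds x)"
            by (rule eventually_nhds_in_open[OF open_halfspace_lt]) (use neg zfe in simp)
          thus ?thesis
            by (rule eventually_mono) (use neg i in \<open>auto simp: zfe s_def lr_eq\<close>)
        qed
      qed
    qed
    have evall: "eventually (\<lambda>y. \<forall>i\<in>{..<n1}. leaky_relu \<alpha> (zf i y) = s i * zf i y) (nhds x)"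
      by (rule eventually_ball_finite[OF _ evi]) simp
    have "eventually (\<lambda>y. mlp_layer \<alpha> W b (Suc l) (vec_of_cart y) = fst (F (s,p)) *\<^sub>v vec_of_cart y + snd (F (s,p))) (nhds x)"
      using eventually_conj[OF ev evall]
    proof (rule eventually_mono)
      fix y :: "real^'n"
      assume H1: "mlp_layer \<alpha> W b l (vec_of_cart y) = fst p *\<^sub>v vec_of_cart y + snd p \<and>
          (\<forall>i\<in>{..<n1}. leaky_relu \<alpha> (zf i y) = s i * zf i y)"
      define u where "u = vec_of_cart y"
      have u: "u \<in> carrier_vec k0" unfolding u_def by (rule uc)
      have WMc: "W' * M \<in> carrier_mat n1 k0" using Wc Mc by simp
      have lhs: "mlp_layer \<alpha> W b (Suc l) (vec_of_cart y) = map_vec (leaky_relu \<alpha>) (W' *\<^sub>v (M *\<^sub>v u + c) + b')"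
        using H1 unfolding W'_def b'_def M_def c_def u_def by simp
      have rhs: "fst (F (s,p)) *\<^sub>v u + snd (F (s,p)) =
          vec n1 (\<lambda>i. s i * ((W' * M) *\<^sub>v u) $ i) + vec n1 (\<lambda>i. s i * (W' *\<^sub>v c + b') $ i)"
        unfolding F_def M_def c_def using scale_rows[OF WMc u] by (simp add: M_def)
      have veq: "map_vec (leaky_relu \<alpha>) (W' *\<^sub>v (M *\<^sub>v u + c) + b') =
          Matrix.vec n1 (\<lambda>i. s i * ((W' * M) *\<^sub>v u) $ i) + Matrix.vec n1 (\<lambda>i. s i * (W' *\<^sub>v c + b') $ i)"
      proof (rule eq_vecI)
        fix i assume "i < dim_vec (vec n1 (\<lambda>i. s i * ((W' * M) *\<^sub>v u) $ i) + vec n1 (\<lambda>i. s i * (W' *\<^sub>v c + b') $ i))"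
        hence i: "i < n1" by simp
        have z: "(W' *\<^sub>v (M *\<^sub>v u + c) + b') $ i = zf i y"
          unfolding zf_def u_def[symmetric] by (rule affine_comp[OF Wc Mc cc u bc i])
        have "((W' * M) *\<^sub>v u) $ i = scalar_prod (row (W' * M) i) u"
          by (rule index_mult_mat_vec) (use Wc i in simp)
        hence z2: "s i * ((W' * M) *\<^sub>v u) $ i + s i * (W' *\<^sub>v c + b') $ i = s i * zf i y"
          unfolding zf_def u_def[symmetric] by (simp add: distrib_left)
        have "map_vec (leaky_relu \<alpha>) (W' *\<^sub>v (M *\<^sub>v u + c) + b') $ i = leaky_relu \<alpha> (zf i y)"
          using z i Wc bc by simp
        also have "\<dots> = s i * zf i y" using H1 i by simp
        also have "\<dots> = (vec n1 (\<lambda>i. s i * ((W' * M) *\<^sub>v u) $ i) + vec n1 (\<lambda>i. s i * (W' *\<^sub>v c + b') $ i)) $ i"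
          using z2 i by simp
        finally show "map_vec (leaky_relu \<alpha>) (W' *\<^sub>v (M *\<^sub>v u + c) + b') $ i =
            (vec n1 (\<lambda>i. s i * ((W' * M) *\<^sub>v u) $ i) + vec n1 (\<lambda>i. s i * (W' *\<^sub>v c + b') $ i)) $ i" .
      qed (use Wc bc in simp)
      show "mlp_layer \<alpha> W b (Suc l) (vec_of_cart y) = fst (F (s,p)) *\<^sub>v vec_of_cart y + snd (F (s,p))"
        using lhs rhs veq unfolding u_def by simp
    qed
    moreover have "F (s,p) \<in> A'" unfolding A'_def using sS p by blast
    ultimately show "\<exists>p\<in>A'. eventually (\<lambda>y. mlp_layer \<alpha> W b (Suc l) (vec_of_cart y) = fst p *\<^sub>v vec_of_cart y + snd p) (nhds x)"
      by blast
  qed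
  show ?case
    unfolding n1_def[symmetric] k0_def[symmetric]
    by (rule exI[of _ A'], rule exI[of _ N']) (use finA' nullN' propA' locA' in \<open>intro conjI\<close>)
qed

lemma layer_surj:
  fixes \<alpha> :: real and W :: "nat \<Rightarrow> real mat" and b :: "nat \<Rightarrow> real Matrix.vec"
    and d :: "nat \<Rightarrow> nat" and L :: nat
  assumes alpha: "0 < \<alpha>"
    and W_dim: "\<forall>l\<in>{1..L}. W l \<in> carrier_mat (d l) (d (l - 1))"
    and b_dim: "\<forall>l\<in>{1..L}. b l \<in> carrier_vec (d l)"
    and W_rank: "\<forall>l\<in>{1..L}. vec_space.rank (d l) (W l) = min (d l) (d (l - 1))"
    and dec: "\<forall>k<L. d (Suc k) \<le> d k"
  shows "l \<le> L \<Longrightarrow> \<forall>y\<in>carrier_vec (d l). \<exists>v\<in>carrier_vec (d 0). mlp_layer \<alpha> W b l v = y"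
proof (induction l)
  case 0 thus ?case by simp
next
  case (Suc l)
  hence lL: "l \<le> L" by simp
  have sl: "Suc l \<in> {1..L}" using Suc.prems by simp
  have Wc: "W (Suc l) \<in> carrier_mat (d (Suc l)) (d l)" using bspec[OF W_dim sl] by simp
  have bc: "b (Suc l) \<in> carrier_vec (d (Suc l))" using bspec[OF b_dim sl] by simp
  have rk: "vec_space.rank (d (Suc l)) (W (Suc l)) = d (Suc l)"
    using bspec[OF W_rank sl] dec Suc.prems by (simp add: Suc_le_lessD)
  show ?case
  proof
    fix y :: "real Matrix.vec" assume y: "y \<in> carrier_vec (d (Suc l))"
    define z where "z = Matrix.vec (d (Suc l)) (\<lambda>i. if 0 \<le> y $ i then y $ i else y $ i / \<alpha>)"
    have zc: "z \<in> carrier_vec (d (Suc l))" unfolding z_def by simp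
    have mz: "map_vec (leaky_relu \<alpha>) z = y"
      using y unfolding z_def by (intro eq_vecI) (auto simp: lr_inv[OF alpha])
    have "z - b (Suc l) \<in> carrier_vec (d (Suc l))" using zc bc by simp
    then obtain u where u: "u \<in> carrier_vec (d l)" and Wu: "W (Suc l) *\<^sub>v u = z - b (Suc l)"
      using rank_surj[OF Wc rk] by blast
    obtain v where v: "v \<in> carrier_vec (d 0)" and lv: "mlp_layer \<alpha> W b l v = u"
      using Suc.IH[OF lL] u by blast
    have "W (Suc l) *\<^sub>v u + b (Suc l) = z"
      unfolding Wu using zc bc by (intro eq_vecI) auto
    hence "mlp_layer \<alpha> W b (Suc l) v = y" using lv mz by simp
    thus "\<exists>v\<in>carrier_vec (d 0). mlp_layer \<alpha> W b (Suc l) v = y" using v by blast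
  qed
qed

theorem proposition1:
  fixes \<alpha> :: real and W :: "nat \<Rightarrow> real mat" and b :: "nat \<Rightarrow> real Matrix.vec"
    and d :: "nat \<Rightarrow> nat" and L :: nat
  assumes alpha: "0 < \<alpha>" "\<alpha> < 1"
    and d0: "d 0 = CARD('n::finite)" and dL: "d L = CARD('m::finite)"
    and W_dim: "\<forall>l\<in>{1..L}. W l \<in> carrier_mat (d l) (d (l - 1))"
    and b_dim: "\<forall>l\<in>{1..L}. b l \<in> carrier_vec (d l)"
    and W_rank: "\<forall>l\<in>{1..L}. vec_space.rank (d l) (W l) = min (d l) (d (l - 1))"
    and mono: "(\<forall>l<L. d l \<le> d (Suc l)) \<or> (\<forall>l<L. d (Suc l) \<le> d l)"
  shows "(\<exists>N. N \<in> null_sets (lborel :: (real^'n) measure) \<and>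
            (\<forall>x. x \<notin> N \<longrightarrow>
               (\<exists>f'. ((mlp \<alpha> W b L :: real^'n \<Rightarrow> real^'m) has_derivative f') (at x)
                     \<and> rank (matrix f') = min CARD('n) CARD('m))))
         \<and> (CARD('m) \<le> CARD('n) \<longrightarrow> surj (mlp \<alpha> W b L :: real^'n \<Rightarrow> real^'m))"
proof -
  have a0: "0 < \<alpha>" using alpha by simp
  obtain A N where finA: "finite A" and nullN: "N \<in> null_sets (lborel :: (real^'n) measure)"
    and propA: "\<forall>p\<in>A. fst p \<in> carrier_mat (d L) (d 0) \<and> snd p \<in> carrier_vec (d L) \<and>
        ((\<forall>k<L. d k \<le> d (Suc k)) \<longrightarrow> (\<forall>v\<in>carrier_vec (d 0). fst p *\<^sub>v v = 0\<^sub>v (d L) \<longrightarrow> v = 0\<^sub>v (d 0))) \<and>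
        ((\<forall>k<L. d (Suc k) \<le> d k) \<longrightarrow> (\<forall>y\<in>carrier_vec (d L). \<exists>v\<in>carrier_vec (d 0). fst p *\<^sub>v v = y))"
    and locA: "\<forall>x::real^'n. x \<notin> N \<longrightarrow> (\<exists>p\<in>A. eventually (\<lambda>y. mlp_layer \<alpha> W b L (vec_of_cart y) = fst p *\<^sub>v vec_of_cart y + snd p) (nhds x))"
    using local_affine[OF a0 d0 W_dim b_dim W_rank, of L] by blast
  have part1: "\<forall>x. x \<notin> N \<longrightarrow>
               (\<exists>f'. ((mlp \<alpha> W b L :: real^'n \<Rightarrow> real^'m) has_derivative f') (at x)
                     \<and> rank (matrix f') = min CARD('n) CARD('m))"
  proof (intro allI impI)
    fix x :: "real^'n" assume "x \<notin> N"
    then obtain p where p: "p \<in> A" and ev: "eventually (\<lambda>y. mlp_layer \<alpha> W b L (vec_of_cart y) = fst p *\<^sub>v vec_of_cart y + snd p) (nhds x)"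
      using locA by blast
    define M where "M = fst p"
    define c where "c = snd p"
    have Mc: "M \<in> carrier_mat CARD('m) CARD('n)" and cc: "c \<in> carrier_vec CARD('m)"
      using propA p d0 dL unfolding M_def c_def by auto
    define G where "G = (\<lambda>y::real^'n. (cart_of_vec (M *\<^sub>v vec_of_cart y) :: real^'m))"
    define k where "k = (cart_of_vec c :: real^'m)"
    have lin: "linear G"
    proof (rule linearI)
      fix y1 y2 :: "real^'n"
      show "G (y1 + y2) = G y1 + G y2"
        unfolding G_def vec_of_cart_add
        by (subst mult_add_distrib_mat_vec[OF Mc]) (auto intro: cart_of_vec_add[OF mult_mat_vec_carrier[OF Mc] mult_mat_vec_carrier[OF Mc]])
    next
      fix r :: real and y :: "real^'n"
      show "G (r *\<^sub>R y) = r *\<^sub>R G y"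
        unfolding G_def vec_of_cart_scale
        by (subst mult_mat_vec[OF Mc]) (auto intro: cart_of_vec_scale[OF mult_mat_vec_carrier[OF Mc]])
    qed
    have evm: "eventually (\<lambda>y. G y + k = mlp \<alpha> W b L y) (nhds x)"
      using ev
    proof (rule eventually_mono)
      fix y :: "real^'n"
      assume "mlp_layer \<alpha> W b L (vec_of_cart y) = fst p *\<^sub>v vec_of_cart y + snd p"
      hence "mlp \<alpha> W b L y = cart_of_vec (M *\<^sub>v vec_of_cart y + c)"
        unfolding mlp_def M_def c_def by simp
      also have "\<dots> = G y + k"
        unfolding G_def k_def by (rule cart_of_vec_add[OF mult_mat_vec_carrier[OF Mc] cc]) simp
      finally show "G y + k = mlp \<alpha> W b L y" by simp
    qed
    have der0: "((\<lambda>y. G y + k) has_derivative G) (at x)"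
      by (rule has_derivative_add_const[OF linear_imp_has_derivative[OF lin]])
    have der: "((mlp \<alpha> W b L :: real^'n \<Rightarrow> real^'m) has_derivative G) (at x)"
      using evm unfolding eventually_nhds_conv_at
      by (intro has_derivative_transform_eventually[OF der0]) auto
    have mG: "(\<lambda>v. matrix G *v v) = G"
      using matrix_works lin by (auto simp: linear_matrix_vector_mul_eq)
    have rkG: "rank (matrix G) = dim (range G)"
      unfolding rank_dim_range using mG by simp
    have "rank (matrix G) = min CARD('n) CARD('m)"
      using mono
    proof
      assume inc: "\<forall>l<L. d l \<le> d (Suc l)"
      have "d 0 \<le> d L" using chain_mono[OF inc] by simp
      hence mn: "min CARD('n) CARD('m) = CARD('n)" using d0 dL by simp
      have "inj G" unfolding linear_injective_0[OF lin]
      proof (intro allI impI)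
        fix y :: "real^'n" assume "G y = 0"
        hence "M *\<^sub>v vec_of_cart y = 0\<^sub>v CARD('m)"
          unfolding G_def using cart_of_vec_eq0[OF mult_mat_vec_carrier[OF Mc vec_of_cart_carrier]] by blast
        hence "vec_of_cart y = 0\<^sub>v CARD('n)"
          using propA p inc d0 dL unfolding M_def by auto
        thus "y = 0" by (rule vec_of_cart_eq0)
      qed
      hence "dim (range G) = dim (UNIV :: (real^'n) set)"
        by (intro dim_image_eq lin) (simp add: inj_on_def inj_def)
      thus ?thesis using rkG mn by simp
    next
      assume dec: "\<forall>l<L. d (Suc l) \<le> d l"
      have "d L \<le> d 0" using chain_anti[OF dec] by simp
      hence mn: "min CARD('n) CARD('m) = CARD('m)" using d0 dL by simp
      have "surj G"
        unfolding surj_def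
      proof
        fix z :: "real^'m"
        have "vec_of_cart z \<in> carrier_vec (d L)" using dL by simp
        then obtain v where v: "v \<in> carrier_vec (d 0)" and Mv: "M *\<^sub>v v = vec_of_cart z"
          using propA p dec unfolding M_def by blast
        have "G (cart_of_vec v) = z"
          unfolding G_def using vec_cart_vec[where 'n='n, of v] v d0 Mv by simp
        thus "\<exists>y. z = G y" by metis
      qed
      thus ?thesis using rkG mn by simp
    qed
    thus "\<exists>f'. ((mlp \<alpha> W b L :: real^'n \<Rightarrow> real^'m) has_derivative f') (at x)
                     \<and> rank (matrix f') = min CARD('n) CARD('m)"
      using der by blast
  qed
  have part2: "CARD('m) \<le> CARD('n) \<longrightarrow> surj (mlp \<alpha> W b L :: real^'n \<Rightarrow> real^'m)"
  proof
    assume le: "CARD('m) \<le> CARD('n)"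
    have dec: "\<forall>k<L. d (Suc k) \<le> d k"
      using mono
    proof
      assume inc: "\<forall>l<L. d l \<le> d (Suc l)"
      show ?thesis
      proof (intro allI impI)
        fix k assume kL: "k < L"
        have "d (Suc k) \<le> d L" using chain_mono[OF inc, of "Suc k" L] kL by simp
        moreover have "d 0 \<le> d k" using chain_mono[OF inc, of 0 k] kL by simp
        ultimately show "d (Suc k) \<le> d k" using le d0 dL by simp
      qed
    qed simp
    have sj: "\<forall>y\<in>carrier_vec (d L). \<exists>v\<in>carrier_vec (d 0). mlp_layer \<alpha> W b L v = y"
      using layer_surj[OF a0 W_dim b_dim W_rank dec] by simp
    show "surj (mlp \<alpha> W b L :: real^'n \<Rightarrow> real^'m)"
      unfolding surj_def
    proof
      fix z :: "real^'m"
      have "vec_of_cart z \<in> carrier_vec (d L)" using dL by simp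
      then obtain v where v: "v \<in> carrier_vec (d 0)" and lv: "mlp_layer \<alpha> W b L v = vec_of_cart z"
        using sj by blast
      have "mlp \<alpha> W b L (cart_of_vec v :: real^'n) = z"
        unfolding mlp_def using vec_cart_vec[where 'n='n, of v] v d0 lv by simp
      thus "\<exists>x::real^'n. z = mlp \<alpha> W b L x" by metis
    qed
  qed
  show ?thesis using nullN part1 part2 by blast
qed

end
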